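(* Let $\mathbf{x}$ be generated by an additive noise model $x_i=f_i(\mathbf{x}_{\mathrm{pa}(i)})+\epsilon_i$ over a DAG $\mathcal{G}$ with mutually independent $\epsilon_i\sim\mathcal{N}(0,\sigma^2)$, $\sigma^2>0$, and $f_i$ twice continuously differentiable, with all expectations below finite. Let $H(\mathbf{x})=-\nabla^2_{\mathbf{x}}\log p(\mathbf{x})$ and let $l$ be a sink (leaf) node of $\mathcal{G}$. Define the sample-wise Schur complement $$\mathrm{Schur}(H(\mathbf{x})) = H_{\setminus l,\setminus l}(\mathbf{x}) - H_{\setminus l,l}(\mathbf{x})\,H_{ll}(\mathbf{x})^{-1}\,H_{l,\setminus l}(\mathbf{x}).$$ Then $\mathbb{E}_{p(\mathbf{x})}[\mathrm{Schur}(H(\mathbf{x}))] = \mathcal{I}_{\mathrm{marginal}}$, where $\mathcal{I}_{\mathrm{marginal}} = \mathbb{E}[-\nabla^2_{\mathbf{x}_{\setminus l}}\log p(\mathbf{x}_{\setminus l})]$ is the expected negative Hessian of the log-density of the marginal distribution of $\mathbf{x}_{\setminus l}$.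
   Context: $\mathrm{pa}(i)$ denotes the parents of node $i$ in $\mathcal{G}$; $p$ is the joint density of $\mathbf{x}$. For a matrix $M$ indexed by $\{1,\dots,d\}$, $M_{\setminus l,\setminus l}$ is the submatrix with row and column $l$ removed, $M_{\setminus l,l}$ the $l$-th column with entry $l$ removed, $M_{l,\setminus l}$ the $l$-th row with entry $l$ removed, $M_{ll}$ the $(l,l)$ entry. $\mathbf{x}_{\setminus l}$ is $\mathbf{x}$ with coordinate $l$ removed. *)

theory Defs
  imports "HOL-Probability.Probability"
begin

definition pd :: "'i \<Rightarrow> (('i \<Rightarrow> real) \<Rightarrow> real) \<Rightarrow> ('i \<Rightarrow> real) \<Rightarrow> real" where
  "pd j g x = deriv (\<lambda>t. g (x(j := t))) (x j)"

definition C2 :: "(('i \<Rightarrow> real) \<Rightarrow> real) \<Rightarrow> bool" where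
  "C2 g \<longleftrightarrow>
     continuous_on UNIV g \<and>
     (\<forall>j x. (\<lambda>t. g (x(j := t))) differentiable (at (x j))) \<and>
     (\<forall>k. continuous_on UNIV (pd k g)) \<and>
     (\<forall>j k x. (\<lambda>t. pd k g (x(j := t))) differentiable (at (x j))) \<and>
     (\<forall>j k. continuous_on UNIV (pd j (pd k g)))"

definition negHessLog :: "(('i \<Rightarrow> real) \<Rightarrow> real) \<Rightarrow> 'i \<Rightarrow> 'i \<Rightarrow> ('i \<Rightarrow> real) \<Rightarrow> real" where
  "negHessLog g j k x = - pd j (pd k (\<lambda>y. ln (g y))) x"

text \<open>Entry (j,k) (j,k distinct from l) of the Schur complement of the (l,l) entry:
  H_jk - H_jl * H_ll^{-1} * H_lk.\<close>
definition schur :: "('i \<Rightarrow> 'i \<Rightarrow> real) \<Rightarrow> 'i \<Rightarrow> 'i \<Rightarrow> 'i \<Rightarrow> real" where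
  "schur H l j k = H j k - H j l * inverse (H l l) * H l k"

end

theory Submission
  imports Defs
begin



lemma shear_preserving:
  fixes N :: "'b measure" and h :: "'b \<Rightarrow> real"
  assumes h[measurable]: "h \<in> borel_measurable N"
  shows "distr (N \<Otimes>\<^sub>M lborel) (N \<Otimes>\<^sub>M lborel) (\<lambda>(y,e). (y, h y + e)) = (N \<Otimes>\<^sub>M (lborel::real measure))"
proof (rule measure_eqI)
  have meas[measurable]: "(\<lambda>(y,e). (y, h y + e)) \<in> measurable (N \<Otimes>\<^sub>M lborel) (N \<Otimes>\<^sub>M (lborel::real measure))"
    by measurable
  show "sets (distr (N \<Otimes>\<^sub>M lborel) (N \<Otimes>\<^sub>M lborel) (\<lambda>(y,e). (y, h y + e))) = sets (N \<Otimes>\<^sub>M (lborel::real measure))"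
    by simp
  fix A assume A: "A \<in> sets (distr (N \<Otimes>\<^sub>M lborel) (N \<Otimes>\<^sub>M lborel) (\<lambda>(y,e). (y, h y + e)))"
  then have A'[measurable]: "A \<in> sets (N \<Otimes>\<^sub>M (lborel::real measure))" by simp
  let ?B = "(\<lambda>(y,e). (y, h y + e)) -` A \<inter> space (N \<Otimes>\<^sub>M (lborel::real measure))"
  have B[measurable]: "?B \<in> sets (N \<Otimes>\<^sub>M (lborel::real measure))"
    using meas A' by (rule measurable_sets)
  have "emeasure (distr (N \<Otimes>\<^sub>M lborel) (N \<Otimes>\<^sub>M lborel) (\<lambda>(y,e). (y, h y + e))) A
      = emeasure (N \<Otimes>\<^sub>M lborel) ?B"
    by (rule emeasure_distr[OF meas A'])
  also have "\<dots> = (\<integral>\<^sup>+ y. \<integral>\<^sup>+ e. indicator ?B (y, e) \<partial>lborel \<partial>N)"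
    by (rule lborel.emeasure_pair_measure[OF B])
  also have "\<dots> = (\<integral>\<^sup>+ y. \<integral>\<^sup>+ e. indicator A (y, h y + e) \<partial>lborel \<partial>N)"
    by (intro nn_integral_cong) (auto simp: indicator_def space_pair_measure)
  also have "\<dots> = (\<integral>\<^sup>+ y. \<integral>\<^sup>+ e. indicator A (y, e) \<partial>lborel \<partial>N)"
  proof (rule nn_integral_cong)
    fix y assume y: "y \<in> space N"
    have m: "(\<lambda>e. indicator A (y, e) :: ennreal) \<in> borel_measurable borel"
      using y by measurable
    show "(\<integral>\<^sup>+ e. indicator A (y, h y + e) \<partial>lborel) = (\<integral>\<^sup>+ e. indicator A (y, e) \<partial>lborel)"
      using nn_integral_real_affine[OF m, of 1 "h y"] by simp
  qed
  also have "\<dots> = emeasure (N \<Otimes>\<^sub>M lborel) A"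
    by (rule lborel.emeasure_pair_measure[OF A', symmetric])
  finally show "emeasure (distr (N \<Otimes>\<^sub>M lborel) (N \<Otimes>\<^sub>M lborel) (\<lambda>(y,e). (y, h y + e))) A = emeasure (N \<Otimes>\<^sub>M lborel) A" .
qed



interpretation L: product_sigma_finite "\<lambda>_. lborel :: real measure"
  by (simp add: product_sigma_finite_def lborel.sigma_finite_measure_axioms)

lemma ins_measurable:
  "(\<lambda>(y,t). y(s:=t)) \<in> measurable (PiM J (\<lambda>_. lborel) \<Otimes>\<^sub>M lborel) (PiM (insert s J) (\<lambda>_. lborel::real measure))"
proof -
  have "(\<lambda>(y,t). y(s:=t)) = (\<lambda>(t,y). y(s:=t)) \<circ> (\<lambda>(y,t). (t,y))" by auto
  moreover have "(\<lambda>(t,y). y(s:=t)) \<in> measurable (lborel \<Otimes>\<^sub>M PiM J (\<lambda>_. lborel)) (PiM (insert s J) (\<lambda>_. lborel::real measure))"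
    using measurable_add_dim[of s J "\<lambda>_. lborel::real measure"] by (simp add: split_beta')
  ultimately show ?thesis by (simp add: measurable_comp)
qed

lemma insert_preserving:
  fixes J :: "'i set" and s :: 'i
  assumes J: "finite J" and s: "s \<notin> J"
  shows "distr (PiM J (\<lambda>_. lborel) \<Otimes>\<^sub>M lborel) (PiM (insert s J) (\<lambda>_. lborel)) (\<lambda>(y,t). y(s:=t))
       = PiM (insert s J) (\<lambda>_. lborel::real measure)"
proof (rule L.PiM_eqI)
  show "finite (insert s J)" using J by simp
  show "sets (distr (PiM J (\<lambda>_. lborel) \<Otimes>\<^sub>M lborel) (PiM (insert s J) (\<lambda>_. lborel)) (\<lambda>(y,t). y(s:=t)))
     = sets (PiM (insert s J) (\<lambda>_. lborel::real measure))" by simp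
  fix A :: "'i \<Rightarrow> real set" assume A: "\<And>i. i \<in> insert s J \<Longrightarrow> A i \<in> sets lborel"
  have meas: "(\<lambda>(y,t). y(s:=t)) \<in> measurable (PiM J (\<lambda>_. lborel) \<Otimes>\<^sub>M lborel) (PiM (insert s J) (\<lambda>_. lborel::real measure))"
  proof -
    have "(\<lambda>(y,t). y(s:=t)) = (\<lambda>(t,y). y(s:=t)) \<circ> (\<lambda>(y,t). (t,y))" by auto
    moreover have "(\<lambda>(t,y). y(s:=t)) \<in> measurable (lborel \<Otimes>\<^sub>M PiM J (\<lambda>_. lborel)) (PiM (insert s J) (\<lambda>_. lborel::real measure))"
      using measurable_add_dim[of s J "\<lambda>_. lborel::real measure"] by (simp add: split_beta')
    ultimately show ?thesis by (simp add: measurable_comp)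
  qed
  interpret J: finite_product_sigma_finite "\<lambda>_. lborel :: real measure" J by standard fact
  have *: "(\<lambda>(y,t). y(s:=t)) -` Pi\<^sub>E (insert s J) A \<inter> space (PiM J (\<lambda>_. lborel) \<Otimes>\<^sub>M lborel) = Pi\<^sub>E J A \<times> A s"
    using s by (auto simp: space_PiM space_pair_measure PiE_iff extensional_def split: if_splits)
  have "emeasure (distr (PiM J (\<lambda>_. lborel) \<Otimes>\<^sub>M lborel) (PiM (insert s J) (\<lambda>_. lborel)) (\<lambda>(y,t). y(s:=t))) (Pi\<^sub>E (insert s J) A)
     = emeasure (PiM J (\<lambda>_. lborel) \<Otimes>\<^sub>M lborel) (Pi\<^sub>E J A \<times> A s)"
    using A by (subst emeasure_distr[OF meas]) (auto simp: * intro!: sets_PiM_I_finite J)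
  also have "\<dots> = emeasure (PiM J (\<lambda>_. lborel)) (Pi\<^sub>E J A) * emeasure lborel (A s)"
    using A by (intro lborel.emeasure_pair_measure_Times) (auto intro!: sets_PiM_I_finite J)
  also have "\<dots> = (\<Prod>i\<in>insert s J. emeasure lborel (A i))"
    using A J s by (simp add: J.measure_times mult.commute)
  finally show "emeasure (distr (PiM J (\<lambda>_. lborel) \<Otimes>\<^sub>M lborel) (PiM (insert s J) (\<lambda>_. lborel)) (\<lambda>(y,t). y(s:=t))) (Pi\<^sub>E (insert s J) A)
     = (\<Prod>i\<in>insert s J. emeasure lborel (A i))" .
qed



lemma distributed_cong':
  assumes "distributed M N X f" "\<And>\<omega>. \<omega> \<in> space M \<Longrightarrow> X \<omega> = X' \<omega>"
    "\<And>x. x \<in> space N \<Longrightarrow> f x = f' x"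
  shows "distributed M N X' f'"
proof -
  have m: "f \<in> borel_measurable N" "X \<in> measurable M N" "distr M N X = density N f"
    using assms(1) by (auto simp: distributed_def)
  have m2: "f' \<in> borel_measurable N" using m(1) assms(3) measurable_cong by metis
  have m3: "X' \<in> measurable M N" using m(2) assms(2) measurable_cong by metis
  have "distr M N X' = distr M N X" by (rule distr_cong) (auto simp: assms(2))
  also have "\<dots> = density N f" by (rule m(3))
  also have "\<dots> = density N f'" by (rule density_cong) (auto simp: m m2 assms(3))
  finally show ?thesis using m2 m3 by (simp add: distributed_def)
qed

lemma distributed_transform:
  assumes X: "distributed M N Z g"
    and Phi[measurable]: "Phi \<in> measurable N K" and Psi[measurable]: "Psi \<in> measurable K N"
    and pres: "distr N K Phi = K"
    and inv1: "\<And>z. z \<in> space N \<Longrightarrow> Psi (Phi z) = z"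
    and inv2: "\<And>x. x \<in> space K \<Longrightarrow> Phi (Psi x) = x"
  shows "distributed M K (\<lambda>\<omega>. Phi (Z \<omega>)) (\<lambda>x. g (Psi x))"
proof -
  have Zm[measurable]: "Z \<in> measurable M N" and gm[measurable]: "g \<in> borel_measurable N"
    and ZD: "distr M N Z = density N g"
    using X by (auto simp: distributed_def)
  have presPsi: "distr K N Psi = N"
  proof -
    have "distr K N Psi = distr (distr N K Phi) N Psi" by (simp add: pres)
    also have "\<dots> = distr N N (Psi \<circ> Phi)" by (rule distr_distr) auto
    also have "\<dots> = distr N N (\<lambda>x. x)" by (rule distr_cong) (auto simp: inv1)
    also have "\<dots> = N" by (rule distr_id)
    finally show ?thesis .
  qed
  have "distr M K (\<lambda>\<omega>. Phi (Z \<omega>)) = distr (distr M N Z) K Phi"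
    by (subst distr_distr) (auto simp: comp_def)
  also have "\<dots> = distr (density (distr K N Psi) g) K Phi" by (simp add: ZD presPsi)
  also have "\<dots> = density K (g \<circ> Psi)"
    by (rule distr_density_distr) (auto simp: inv2)
  finally show ?thesis unfolding distributed_def by (auto simp: comp_def)
qed

lemma meas_local:
  fixes g :: "('i::finite \<Rightarrow> real) \<Rightarrow> real"
  assumes c: "continuous_on UNIV g" and loc: "\<And>x y. (\<forall>j\<in>P. x j = y j) \<Longrightarrow> g x = g y"
    and PJ: "P \<subseteq> J"
  shows "g \<in> borel_measurable (PiM J (\<lambda>_. lborel))"
proof -
  have g1: "g \<in> borel_measurable (PiM UNIV (\<lambda>_. lborel))"
  proof -
    have "g \<in> borel_measurable borel" by (rule borel_measurable_continuous_onI[OF c])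
    moreover have "sets (PiM UNIV (\<lambda>_. lborel)) = sets (PiM UNIV (\<lambda>_::'i. borel :: real measure))"
      by (intro sets_PiM_cong) auto
    ultimately have s: "sets (PiM UNIV (\<lambda>_. lborel)) = sets (borel :: ('i \<Rightarrow> real) measure)"
      using sets_PiM_equal_borel[where 'a='i and 'b=real] by simp
    have "borel_measurable (PiM UNIV (\<lambda>_. lborel)) = (borel_measurable borel :: (('i \<Rightarrow> real) \<Rightarrow> real) set)"
      by (rule measurable_cong_sets[OF s refl])
    then show ?thesis using \<open>g \<in> borel_measurable borel\<close> by simp
  qed
  define ext where "ext y = (\<lambda>i. if i \<in> J then y i else (0::real))" for y :: "'i \<Rightarrow> real"
  have e: "ext \<in> measurable (PiM J (\<lambda>_. lborel)) (PiM UNIV (\<lambda>_. lborel))"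
    unfolding ext_def
    apply (rule measurable_PiM_single')
    subgoal for i by (cases "i \<in> J") auto
    by (auto simp: space_PiM)
  have "(\<lambda>y. g (ext y)) \<in> borel_measurable (PiM J (\<lambda>_. lborel))"
    using measurable_comp[OF e g1] by (simp add: comp_def)
  moreover have "\<And>y. g (ext y) = g y" using PJ by (intro loc) (auto simp: ext_def)
  ultimately show ?thesis by simp
qed



lemma indep_distr_pair_map:
  assumes M: "prob_space M" and ind: "prob_space.indep_var M S X T Y" and h: "h \<in> measurable T T'"
  shows "distr M S X \<Otimes>\<^sub>M distr M T' (\<lambda>\<omega>. h (Y \<omega>)) = distr M (S \<Otimes>\<^sub>M T') (\<lambda>\<omega>. (X \<omega>, h (Y \<omega>)))"
proof -
  interpret prob_space M by (rule M)
  have X[measurable]: "X \<in> measurable M S" and Y[measurable]: "Y \<in> measurable M T"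
    and eq: "distr M S X \<Otimes>\<^sub>M distr M T Y = distr M (S \<Otimes>\<^sub>M T) (\<lambda>\<omega>. (X \<omega>, Y \<omega>))"
    using ind unfolding indep_var_distribution_eq by auto
  note h[measurable]
  have "distr M (S \<Otimes>\<^sub>M T') (\<lambda>\<omega>. (X \<omega>, h (Y \<omega>)))
      = distr (distr M (S \<Otimes>\<^sub>M T) (\<lambda>\<omega>. (X \<omega>, Y \<omega>))) (S \<Otimes>\<^sub>M T') (\<lambda>(a, b). (a, h b))"
    by (subst distr_distr) (auto simp: comp_def)
  also have "\<dots> = distr (distr M S X \<Otimes>\<^sub>M distr M T Y) (S \<Otimes>\<^sub>M T') (\<lambda>(a, b). ((\<lambda>x. x) a, h b))"
    by (simp add: eq)
  also have "\<dots> = distr (distr M S X) S (\<lambda>x. x) \<Otimes>\<^sub>M distr (distr M T Y) T' h"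
  proof (rule pair_measure_distr[symmetric])
    show "(\<lambda>x. x) \<in> measurable (distr M S X) S" by simp
    show "h \<in> measurable (distr M T Y) T'" by simp
    have "prob_space (distr (distr M T Y) T' h)"
      by (intro prob_space.prob_space_distr prob_space_distr) auto
    then show "sigma_finite_measure (distr (distr M T Y) T' h)"
      by (rule prob_space_imp_sigma_finite)
  qed
  also have "distr (distr M S X) S (\<lambda>x. x) = distr M S X" by (rule distr_id2) simp
  also have "distr (distr M T Y) T' h = distr M T' (\<lambda>\<omega>. h (Y \<omega>))"
    by (subst distr_distr) (auto simp: comp_def)
  finally show ?thesis ..
qed




lemma lborel_open_pos:
  fixes U :: "real set"
  assumes "open U" "x \<in> U"
  shows "emeasure lborel U > 0"
proof -
  obtain e where e: "e > 0" "ball x e \<subseteq> U" using assms open_contains_ball by blast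
  have sub: "{x - e<..<x + e} \<subseteq> U"
  proof
    fix y assume "y \<in> {x - e<..<x + e}"
    then have "dist x y < e" by (auto simp: dist_real_def abs_less_iff)
    then show "y \<in> U" using e(2) by auto
  qed
  have "emeasure lborel {x - e<..<x + e} \<le> emeasure lborel U"
    using sub assms by (intro emeasure_mono) (auto simp: borel_open)
  moreover have "emeasure lborel {x - e<..<x + e} > 0" using e by simp
  ultimately show ?thesis by order
qed

lemma cont_ae_eq:
  fixes g1 g2 :: "('i::finite \<Rightarrow> real) \<Rightarrow> real" and I :: "'i set"
  assumes c1: "continuous_on (PiE I (\<lambda>_. UNIV)) g1" and c2: "continuous_on (PiE I (\<lambda>_. UNIV)) g2"
    and ae: "AE x in PiM I (\<lambda>_. lborel). g1 x = g2 x"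
    and x0: "x0 \<in> PiE I (\<lambda>_. UNIV)"
  shows "g1 x0 = g2 x0"
proof (rule ccontr)
  assume ne: "g1 x0 \<noteq> g2 x0"
  let ?S = "PiE I (\<lambda>_. UNIV :: real set)"
  have "continuous_on ?S (\<lambda>x. g1 x - g2 x)" using c1 c2 by (intro continuous_on_diff)
  then have "openin (top_of_set ?S) (?S \<inter> (\<lambda>x. g1 x - g2 x) -` (-{0}))"
    by (rule continuous_openin_preimage_gen) auto
  then obtain V where V: "open V" "?S \<inter> (\<lambda>x. g1 x - g2 x) -` (-{0}) = ?S \<inter> V"
    by (auto simp: openin_open)
  have "x0 \<in> V" using V x0 ne by auto
  with V(1) obtain U where U: "\<forall>i\<in>UNIV. openin euclidean (U i)" "x0 \<in> Pi\<^sub>E UNIV U" "Pi\<^sub>E UNIV U \<subseteq> V"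
    unfolding open_fun_def openin_product_topology_alt by blast
  define W where "W = PiE I U"
  have WS: "W \<subseteq> {x \<in> space (PiM I (\<lambda>_. lborel)). \<not> (g1 x = g2 x)}"
  proof
    fix x assume x: "x \<in> W"
    have "x i \<in> U i" for i
    proof (cases "i \<in> I")
      case True then show ?thesis using x by (auto simp: W_def PiE_def Pi_def)
    next
      case False
      then have "x i = x0 i" using x x0 by (auto simp: W_def PiE_def extensional_def)
      then show ?thesis using U(2) by (auto simp: PiE_def Pi_def)
    qed
    then have "x \<in> Pi\<^sub>E UNIV U" by (auto simp: PiE_def Pi_def extensional_def)
    then have "x \<in> V" using U(3) by blast
    moreover have "x \<in> ?S" using x by (auto simp: W_def PiE_def)
    ultimately show "x \<in> {x \<in> space (PiM I (\<lambda>_. lborel)). \<not> (g1 x = g2 x)}"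
      using V(2) by (auto simp: space_PiM)
  qed
  have Uo: "open (U i)" for i using U(1) open_openin by blast
  have Wsets: "\<And>i. i \<in> I \<Longrightarrow> U i \<in> sets lborel" using Uo by (auto simp: borel_open)
  have "emeasure (PiM I (\<lambda>_. lborel)) W = (\<Prod>i\<in>I. emeasure lborel (U i))"
    unfolding W_def by (rule L.emeasure_PiM) (use Uo in \<open>auto simp: borel_open\<close>)
  moreover have "(\<Prod>i\<in>I. emeasure lborel (U i)) > 0"
  proof -
    have "\<And>i. emeasure lborel (U i) > 0" using Uo U(2) by (intro lborel_open_pos) (auto simp: PiE_def)
    then have "\<And>i. emeasure lborel (U i) \<noteq> 0" by (metis order_less_irrefl)
    then have "(\<Prod>i\<in>I. emeasure lborel (U i)) \<noteq> 0" by (simp add: prod_zero_iff)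
    then show ?thesis by (simp add: zero_less_iff_neq_zero)
  qed
  moreover from ae obtain N where N: "{x \<in> space (PiM I (\<lambda>_. lborel)). \<not> (g1 x = g2 x)} \<subseteq> N"
    "emeasure (PiM I (\<lambda>_. lborel)) N = 0" "N \<in> sets (PiM I (\<lambda>_. lborel))"
    by (rule AE_E)
  then have "emeasure (PiM I (\<lambda>_. lborel)) W \<le> 0"
    using WS by (metis emeasure_mono order_trans)
  ultimately show False by (metis leD)
qed




lemma pd_DERIV:
  assumes "(\<lambda>t. g (x(j := t))) differentiable (at (x j))"
  shows "((\<lambda>t. g (x(j := t))) has_real_derivative pd j g x) (at (x j))"
  using assms unfolding pd_def by (simp add: DERIV_deriv_iff_real_differentiable)

lemma coord_DERIV:
  "((\<lambda>t. (x(j := t)) i) has_real_derivative (if i = j then 1 else 0)) (at (x j))"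
  by (cases "i = j") (auto intro!: derivative_eq_intros)

lemma C2_D1: "C2 g \<Longrightarrow> ((\<lambda>t. g (x(j := t))) has_real_derivative pd j g x) (at (x j))"
  by (rule pd_DERIV) (simp add: C2_def)

lemma C2_D2: "C2 g \<Longrightarrow> ((\<lambda>t. pd k g (x(j := t))) has_real_derivative pd j (pd k g) x) (at (x j))"
  by (rule pd_DERIV) (simp add: C2_def)

lemma ln_normal_density:
  assumes "\<sigma> > 0"
  shows "ln (normal_density 0 \<sigma> u) = - ln (sqrt (2 * pi * \<sigma>\<^sup>2)) - u\<^sup>2 / (2 * \<sigma>\<^sup>2)"
  using assms by (simp add: normal_density_def ln_mult ln_div)

lemma hess_formula:
  fixes f :: "'i::finite \<Rightarrow> ('i \<Rightarrow> real) \<Rightarrow> real" and g :: "('i \<Rightarrow> real) \<Rightarrow> real"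
  assumes C2: "\<And>i. C2 (f i)" and sig: "\<sigma> > 0"
    and geq: "\<And>z. z \<in> PiE I (\<lambda>_. UNIV) \<Longrightarrow> g z = (\<Prod>i\<in>I. normal_density 0 \<sigma> (z i - f i z))"
    and j: "j \<in> I" and k: "k \<in> I" and x: "x \<in> PiE I (\<lambda>_. UNIV)"
  shows "negHessLog g j k x = (\<Sum>i\<in>I. ((if i = j then 1 else 0) - pd j (f i) x) * ((if i = k then 1 else 0) - pd k (f i) x)
             - (x i - f i x) * pd j (pd k (f i)) x) / \<sigma>\<^sup>2"
proof -
  define c0 where "c0 = - ln (sqrt (2 * pi * \<sigma>\<^sup>2))"
  have lng: "ln (g z) = (\<Sum>i\<in>I. c0 - (z i - f i z)\<^sup>2 / (2 * \<sigma>\<^sup>2))" if "z \<in> PiE I (\<lambda>_. UNIV)" for z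
  proof -
    have "ln (g z) = (\<Sum>i\<in>I. ln (normal_density 0 \<sigma> (z i - f i z)))"
      unfolding geq[OF that] using sig
      by (intro ln_prod) (auto simp: normal_density_def)
    then show ?thesis using sig by (simp add: ln_normal_density c0_def)
  qed
  define F where "F z = - (\<Sum>i\<in>I. (z i - f i z) * ((if i = k then 1 else 0) - pd k (f i) z) / \<sigma>\<^sup>2)" for z
  have step1: "pd k (\<lambda>y. ln (g y)) z = F z" if z: "z \<in> PiE I (\<lambda>_. UNIV)" for z
  proof -
    have e: "(\<lambda>t. ln (g (z(k := t)))) = (\<lambda>t. \<Sum>i\<in>I. c0 - ((z(k := t)) i - f i (z(k := t)))\<^sup>2 / (2 * \<sigma>\<^sup>2))"
      using z k by (intro ext lng) (auto simp: PiE_def extensional_def)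
    have "((\<lambda>t. \<Sum>i\<in>I. c0 - ((z(k := t)) i - f i (z(k := t)))\<^sup>2 / (2 * \<sigma>\<^sup>2)) has_real_derivative
          (\<Sum>i\<in>I. - (2 * (z i - f i z) * ((if i = k then 1 else 0) - pd k (f i) z)) / (2 * \<sigma>\<^sup>2))) (at (z k))"
    proof (rule DERIV_sum)
      fix i assume "i \<in> I"
      have d: "((\<lambda>t. (z(k := t)) i - f i (z(k := t))) has_real_derivative ((if i = k then 1 else 0) - pd k (f i) z)) (at (z k))"
        by (rule DERIV_diff[OF coord_DERIV C2_D1[OF C2]])
      have "((\<lambda>t. c0 - ((z(k := t)) i - f i (z(k := t)))\<^sup>2 / (2 * \<sigma>\<^sup>2)) has_real_derivative
          (0 - of_nat 2 * (((if i = k then 1 else 0) - pd k (f i) z) * ((z(k := z k)) i - f i (z(k := z k))) ^ (2 - Suc 0)) / (2 * \<sigma>\<^sup>2))) (at (z k))"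
        by (intro DERIV_diff DERIV_const DERIV_cdivide DERIV_power d)
      then show "((\<lambda>t. c0 - ((z(k := t)) i - f i (z(k := t)))\<^sup>2 / (2 * \<sigma>\<^sup>2)) has_real_derivative
          (- (2 * (z i - f i z) * ((if i = k then 1 else 0) - pd k (f i) z)) / (2 * \<sigma>\<^sup>2))) (at (z k))"
        by (rule DERIV_cong) (auto simp: minus_divide_left algebra_simps)
    qed
    then have "pd k (\<lambda>y. ln (g y)) z = (\<Sum>i\<in>I. - (2 * (z i - f i z) * ((if i = k then 1 else 0) - pd k (f i) z)) / (2 * \<sigma>\<^sup>2))"
      unfolding pd_def e by (rule DERIV_imp_deriv)
    also have "\<dots> = F z" unfolding F_def sum_negf[symmetric]
      by (rule sum.cong) (use sig in \<open>auto simp: field_simps\<close>)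
    finally show ?thesis .
  qed
  have e2: "(\<lambda>t. pd k (\<lambda>y. ln (g y)) (x(j := t))) = (\<lambda>t. F (x(j := t)))"
    using x j by (intro ext step1) (auto simp: PiE_def extensional_def)
  have "((\<lambda>t. F (x(j := t))) has_real_derivative
     - (\<Sum>i\<in>I. (((if i = j then 1 else 0) - pd j (f i) x) * ((if i = k then 1 else 0) - pd k (f i) x)
             + (x i - f i x) * (0 - pd j (pd k (f i)) x)) / \<sigma>\<^sup>2)) (at (x j))"
    unfolding F_def
  proof (intro DERIV_minus DERIV_sum)
    fix i assume "i \<in> I"
    have d: "((\<lambda>t. (x(j := t)) i - f i (x(j := t))) has_real_derivative ((if i = j then 1 else 0) - pd j (f i) x)) (at (x j))"
      by (rule DERIV_diff[OF coord_DERIV C2_D1[OF C2]])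
    have d2: "((\<lambda>t. (if i = k then 1 else 0) - pd k (f i) (x(j := t))) has_real_derivative (0 - pd j (pd k (f i)) x)) (at (x j))"
      by (rule DERIV_diff[OF DERIV_const C2_D2[OF C2]])
    have "((\<lambda>t. ((x(j := t)) i - f i (x(j := t))) * ((if i = k then 1 else 0) - pd k (f i) (x(j := t)))) has_real_derivative
       (((if i = j then 1 else 0) - pd j (f i) x) * ((if i = k then 1 else 0) - pd k (f i) (x(j := x j)))
        + (0 - pd j (pd k (f i)) x) * ((x(j := x j)) i - f i (x(j := x j))))) (at (x j))"
      by (rule DERIV_mult[OF d d2])
    then have "((\<lambda>t. ((x(j := t)) i - f i (x(j := t))) * ((if i = k then 1 else 0) - pd k (f i) (x(j := t)))) has_real_derivative
       (((if i = j then 1 else 0) - pd j (f i) x) * ((if i = k then 1 else 0) - pd k (f i) x)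
        + (x i - f i x) * (0 - pd j (pd k (f i)) x))) (at (x j))"
      by (rule DERIV_cong) (simp add: mult.commute)
    then show "((\<lambda>t. ((x(j := t)) i - f i (x(j := t))) * ((if i = k then 1 else 0) - pd k (f i) (x(j := t))) / \<sigma>\<^sup>2) has_real_derivative
       (((if i = j then 1 else 0) - pd j (f i) x) * ((if i = k then 1 else 0) - pd k (f i) x)
        + (x i - f i x) * (0 - pd j (pd k (f i)) x)) / \<sigma>\<^sup>2) (at (x j))"
      by (rule DERIV_cdivide)
  qed
  then have "pd j (pd k (\<lambda>y. ln (g y))) x = - (\<Sum>i\<in>I. (((if i = j then 1 else 0) - pd j (f i) x) * ((if i = k then 1 else 0) - pd k (f i) x)
             + (x i - f i x) * (0 - pd j (pd k (f i)) x)) / \<sigma>\<^sup>2)"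
    unfolding pd_def[of j] e2 by (rule DERIV_imp_deriv)
  then show ?thesis unfolding negHessLog_def by (simp add: algebra_simps sum_divide_distrib)
qed


definition offl :: "'i \<Rightarrow> (('i \<Rightarrow> real) \<Rightarrow> real) \<Rightarrow> bool" where
  "offl l g \<longleftrightarrow> (\<forall>y y'. (\<forall>i. i \<noteq> l \<longrightarrow> y i = y' i) \<longrightarrow> g y = g y')"

lemma offl_pd_l:
  assumes "offl l g" shows "pd l g y = 0"
proof -
  have "(\<lambda>t. g (y(l := t))) = (\<lambda>t. g y)"
    using assms unfolding offl_def by (intro ext) (auto dest: spec)
  then show ?thesis unfolding pd_def by (simp add: DERIV_imp_deriv[OF DERIV_const])
qed

lemma offl_pd:
  fixes g :: "('i \<Rightarrow> real) \<Rightarrow> real"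
  assumes "offl l g" shows "offl l (pd k g)"
proof (cases "k = l")
  case True then show ?thesis using offl_pd_l[OF assms] by (simp add: offl_def)
next
  case False
  show ?thesis unfolding offl_def
  proof (intro allI impI)
    fix y y' :: "'i \<Rightarrow> real" assume a: "\<forall>i. i \<noteq> l \<longrightarrow> y i = y' i"
    have "(\<lambda>t. g (y(k := t))) = (\<lambda>t. g (y'(k := t)))"
      using assms a unfolding offl_def by (intro ext) auto
    moreover have "y k = y' k" using a False by auto
    ultimately show "pd k g y = pd k g y'" unfolding pd_def by simp
  qed
qed

lemma offl_restrict:
  assumes "offl l g" shows "g (restrict x (UNIV - {l})) = g x"
  using assms unfolding offl_def by auto


context
  fixes M :: "'a measure"
    and pa :: "'i::finite \<Rightarrow> 'i set"
    and f :: "'i \<Rightarrow> ('i \<Rightarrow> real) \<Rightarrow> real"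
    and \<epsilon> :: "'i \<Rightarrow> 'a \<Rightarrow> real"
    and X :: "'a \<Rightarrow> ('i \<Rightarrow> real)"
    and \<sigma> :: real
  assumes M: "prob_space M"
    and dag: "acyclic {(j, i). j \<in> pa i}"
    and f_pa: "\<And>i x y. (\<forall>j\<in>pa i. x j = y j) \<Longrightarrow> f i x = f i y"
    and f_C2: "\<And>i. C2 (f i)"
    and sigma_pos: "\<sigma> > 0"
    and noise_indep: "prob_space.indep_vars M (\<lambda>_. borel) \<epsilon> UNIV"
    and noise_gauss: "\<And>i. distributed M lborel (\<epsilon> i) (\<lambda>t. ennreal (normal_density 0 \<sigma> t))"
    and anm: "\<And>\<omega> i. \<omega> \<in> space M \<Longrightarrow> X \<omega> i = f i (X \<omega>) + \<epsilon> i \<omega>"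
begin

lemma not_self_parent: "j \<notin> pa j"
proof
  assume "j \<in> pa j"
  then have "(j, j) \<in> {(j, i). j \<in> pa i}" by simp
  then have "(j, j) \<in> {(j, i). j \<in> pa i}\<^sup>+" by blast
  with dag show False by (simp add: acyclic_def)
qed

lemma sink_exists:
  assumes "I \<noteq> {}"
  shows "\<exists>s\<in>I. \<forall>i\<in>I. s \<notin> pa i"
proof -
  have "wf ({(j, i). j \<in> pa i}\<inverse>)"
    by (rule finite_acyclic_wf_converse[OF _ dag]) simp
  moreover obtain x where "x \<in> I" using assms by blast
  ultimately show ?thesis
    by (rule wfE_min) auto
qed

lemma f_cont: "continuous_on UNIV (f i)"
  using f_C2[of i] by (simp add: C2_def)

lemma claim:
  assumes "\<And>i. i \<in> I \<Longrightarrow> pa i \<subseteq> I"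
  shows "(\<exists>G. G \<in> measurable (PiM I (\<lambda>_. borel)) (PiM I (\<lambda>_. lborel)) \<and>
              (\<forall>\<omega>\<in>space M. restrict (X \<omega>) I = G (\<lambda>i\<in>I. \<epsilon> i \<omega>))) \<and>
         distributed M (PiM I (\<lambda>_. lborel)) (\<lambda>\<omega>. restrict (X \<omega>) I)
            (\<lambda>x. ennreal (\<Prod>i\<in>I. normal_density 0 \<sigma> (x i - f i x)))"
  using assms
proof (induction "card I" arbitrary: I)
  case 0
  interpret P: prob_space M by (rule M)
  have I: "I = {}" using 0 by simp
  have c: "distr M (count_space {\<lambda>_. undefined}) (\<lambda>\<omega>. \<lambda>_. undefined) = count_space {\<lambda>_::'i. undefined::real}"
  proof (rule measure_eqI)
    fix A :: "('i \<Rightarrow> real) set" assume "A \<in> sets (distr M (count_space {\<lambda>_. undefined}) (\<lambda>\<omega>. \<lambda>_. undefined))"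
    then have "A \<subseteq> {\<lambda>_. undefined}" by simp
    then have "A = {} \<or> A = {\<lambda>_. undefined}" by blast
    then show "emeasure (distr M (count_space {\<lambda>_. undefined}) (\<lambda>\<omega>. \<lambda>_. undefined)) A = emeasure (count_space {\<lambda>_::'i. undefined::real}) A"
      by (auto simp: emeasure_distr P.emeasure_space_1)
  qed simp
  show ?case unfolding I
  proof
    show "\<exists>G. G \<in> measurable (PiM {} (\<lambda>_. borel)) (PiM {} (\<lambda>_. lborel)) \<and>
              (\<forall>\<omega>\<in>space M. restrict (X \<omega>) {} = G (\<lambda>i\<in>{}. \<epsilon> i \<omega>))"
      by (rule exI[of _ "\<lambda>x. x"]) (auto simp: PiM_empty)
    show "distributed M (PiM {} (\<lambda>_. lborel)) (\<lambda>\<omega>. restrict (X \<omega>) {})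
            (\<lambda>x. ennreal (\<Prod>i\<in>{}. normal_density 0 \<sigma> (x i - f i x)))"
    proof -
      have r: "(\<lambda>\<omega>. restrict (X \<omega>) {}) = (\<lambda>\<omega>. \<lambda>_. undefined)" by (auto simp: restrict_def fun_eq_iff)
      show ?thesis
        unfolding distributed_def r by (auto simp: PiM_empty c density_1 intro!: measurable_const)
    qed
  qed
next
  case (Suc n)
  interpret P: prob_space M by (rule M)
  have "I \<noteq> {}"
  proof
    assume "I = {}"
    with Suc.hyps(2) show False by simp
  qed
  then obtain s where sI: "s \<in> I" and sink: "\<And>i. i \<in> I \<Longrightarrow> s \<notin> pa i"
    using sink_exists[of I] by blast
  define J where "J = I - {s}"
  have IJ: "I = insert s J" and sJ: "s \<notin> J" using sI by (auto simp: J_def)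
  have cJ: "n = card J" using Suc.hyps(2) sI by (simp add: J_def)
  have paJ: "\<And>i. i \<in> J \<Longrightarrow> pa i \<subseteq> J" using Suc.prems sink by (auto simp: J_def)
  have pas: "pa s \<subseteq> J" using Suc.prems[OF sI] not_self_parent[of s] by (auto simp: J_def)
  from Suc.hyps(1)[OF cJ paJ] obtain GJ where
    GJm[measurable]: "GJ \<in> measurable (PiM J (\<lambda>_. borel)) (PiM J (\<lambda>_. lborel))" and
    GJr: "\<And>\<omega>. \<omega>\<in>space M \<Longrightarrow> restrict (X \<omega>) J = GJ (\<lambda>i\<in>J. \<epsilon> i \<omega>)" and
    distJ: "distributed M (PiM J (\<lambda>_. lborel)) (\<lambda>\<omega>. restrict (X \<omega>) J)
            (\<lambda>x. ennreal (\<Prod>i\<in>J. normal_density 0 \<sigma> (x i - f i x)))"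
    by blast
  define N where "N = PiM J (\<lambda>_. lborel :: real measure)"
  define K where "K = PiM I (\<lambda>_. lborel :: real measure)"
  have fsm[measurable]: "f s \<in> borel_measurable N"
    unfolding N_def by (rule meas_local[OF f_cont f_pa pas])
  define Phi where "Phi = (\<lambda>(y,e). y(s := f s y + e))"
  define Psi where "Psi = (\<lambda>x. (restrict x J, x s - f s (restrict x J)))"
  have shm[measurable]: "(\<lambda>(y,e). (y, f s y + e)) \<in> measurable (N \<Otimes>\<^sub>M lborel) (N \<Otimes>\<^sub>M (lborel::real measure))"
    by measurable
  have insm: "(\<lambda>(y,t). y(s:=t)) \<in> measurable (N \<Otimes>\<^sub>M lborel) K"
    unfolding N_def K_def IJ by (rule ins_measurable)
  have Phi_eq: "Phi = (\<lambda>(y,t). y(s:=t)) \<circ> (\<lambda>(y,e). (y, f s y + e))"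
    by (auto simp: Phi_def)
  have Phim[measurable]: "Phi \<in> measurable (N \<Otimes>\<^sub>M lborel) K"
    unfolding Phi_eq by (rule measurable_comp[OF shm insm])
  have Psim[measurable]: "Psi \<in> measurable K (N \<Otimes>\<^sub>M lborel)"
  proof -
    have r: "(\<lambda>x. restrict x J) \<in> measurable K N"
      unfolding K_def N_def IJ by (rule measurable_restrict_subset) auto
    have c: "(\<lambda>x. x s) \<in> borel_measurable K"
      unfolding K_def using sI by simp
    have "(\<lambda>x. f s (restrict x J)) \<in> borel_measurable K"
      using measurable_comp[OF r fsm] by (simp add: comp_def)
    then show ?thesis unfolding Psi_def using r c by (auto intro!: measurable_Pair borel_measurable_diff)
  qed
  have pres: "distr (N \<Otimes>\<^sub>M lborel) K Phi = K"
  proof -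
    have "distr (N \<Otimes>\<^sub>M lborel) K Phi
        = distr (distr (N \<Otimes>\<^sub>M lborel) (N \<Otimes>\<^sub>M lborel) (\<lambda>(y,e). (y, f s y + e))) K (\<lambda>(y,t). y(s:=t))"
      unfolding Phi_eq by (rule distr_distr[symmetric, OF insm shm])
    also have "\<dots> = distr (N \<Otimes>\<^sub>M lborel) K (\<lambda>(y,t). y(s:=t))"
      by (simp only: shear_preserving[OF fsm])
    also have "\<dots> = K"
      unfolding N_def K_def IJ by (rule insert_preserving[OF _ sJ]) simp
    finally show ?thesis .
  qed
  have inv1: "Psi (Phi z) = z" if "z \<in> space (N \<Otimes>\<^sub>M lborel)" for z
  proof -
    obtain y e where z: "z = (y, e)" by (cases z)
    have y: "y \<in> PiE J (\<lambda>_. UNIV)"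
      using that z by (auto simp: space_pair_measure N_def space_PiM)
    have "restrict (y(s := f s y + e)) J = y"
      using y sJ by (auto simp: restrict_def PiE_def extensional_def fun_eq_iff)
    then show ?thesis by (simp add: z Phi_def Psi_def)
  qed
  have inv2: "Phi (Psi x) = x" if "x \<in> space K" for x
  proof -
    have x: "x \<in> PiE I (\<lambda>_. UNIV)" using that by (simp add: K_def space_PiM)
    show ?thesis
    proof
      fix i
      show "Phi (Psi x) i = x i"
        using x IJ by (cases "i = s"; cases "i \<in> J") (auto simp: Phi_def Psi_def PiE_def extensional_def)
    qed
  qed
  have ind0: "P.indep_var (PiM J (\<lambda>_. borel)) (\<lambda>\<omega>. restrict (\<lambda>i. \<epsilon> i \<omega>) J)
                          (PiM {s} (\<lambda>_. borel)) (\<lambda>\<omega>. restrict (\<lambda>i. \<epsilon> i \<omega>) {s})"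
    by (rule P.indep_var_restrict[OF noise_indep]) (use sJ in auto)
  have cs: "(\<lambda>z. z s) \<in> measurable (PiM {s} (\<lambda>_. borel)) (lborel :: real measure)"
    using measurable_component_singleton[of s "{s}" "\<lambda>_. borel::real measure"]
    by (simp add: measurable_cong_sets[OF refl sets_lborel])
  have ind1: "P.indep_var N (GJ \<circ> (\<lambda>\<omega>. restrict (\<lambda>i. \<epsilon> i \<omega>) J))
                          (PiM {s} (\<lambda>_. borel)) ((\<lambda>z. z) \<circ> (\<lambda>\<omega>. restrict (\<lambda>i. \<epsilon> i \<omega>) {s}))"
    unfolding N_def by (rule P.indep_var_compose[OF ind0 GJm measurable_ident_sets[OF refl]])
  have deq0: "distr M N (GJ \<circ> (\<lambda>\<omega>. restrict (\<lambda>i. \<epsilon> i \<omega>) J)) \<Otimes>\<^sub>M distr M lborel (\<lambda>\<omega>. (\<lambda>z. z s) (((\<lambda>z. z) \<circ> (\<lambda>\<omega>. restrict (\<lambda>i. \<epsilon> i \<omega>) {s})) \<omega>))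
     = distr M (N \<Otimes>\<^sub>M lborel) (\<lambda>\<omega>. ((GJ \<circ> (\<lambda>\<omega>. restrict (\<lambda>i. \<epsilon> i \<omega>) J)) \<omega>, (\<lambda>z. z s) (((\<lambda>z. z) \<circ> (\<lambda>\<omega>. restrict (\<lambda>i. \<epsilon> i \<omega>) {s})) \<omega>)))"
    by (rule indep_distr_pair_map[OF M ind1 cs])
  have deq: "distr M N (\<lambda>\<omega>. restrict (X \<omega>) J) \<Otimes>\<^sub>M distr M lborel (\<epsilon> s)
           = distr M (N \<Otimes>\<^sub>M lborel) (\<lambda>\<omega>. (restrict (X \<omega>) J, \<epsilon> s \<omega>))"
  proof -
    have "distr M N (GJ \<circ> (\<lambda>\<omega>. restrict (\<lambda>i. \<epsilon> i \<omega>) J)) = distr M N (\<lambda>\<omega>. restrict (X \<omega>) J)"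
      by (rule distr_cong) (auto simp: GJr)
    moreover have "distr M lborel (\<lambda>\<omega>. (\<lambda>z. z s) (((\<lambda>z. z) \<circ> (\<lambda>\<omega>. restrict (\<lambda>i. \<epsilon> i \<omega>) {s})) \<omega>)) = distr M lborel (\<epsilon> s)"
      by (rule distr_cong) auto
    moreover have "distr M (N \<Otimes>\<^sub>M lborel) (\<lambda>\<omega>. ((GJ \<circ> (\<lambda>\<omega>. restrict (\<lambda>i. \<epsilon> i \<omega>) J)) \<omega>, (\<lambda>z. z s) (((\<lambda>z. z) \<circ> (\<lambda>\<omega>. restrict (\<lambda>i. \<epsilon> i \<omega>) {s})) \<omega>)))
       = distr M (N \<Otimes>\<^sub>M lborel) (\<lambda>\<omega>. (restrict (X \<omega>) J, \<epsilon> s \<omega>))"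
      by (rule distr_cong) (auto simp: GJr)
    ultimately show ?thesis using deq0 by simp
  qed
  have joint: "distributed M (N \<Otimes>\<^sub>M lborel) (\<lambda>\<omega>. (restrict (X \<omega>) J, \<epsilon> s \<omega>))
      (\<lambda>(y, e). ennreal (\<Prod>i\<in>J. normal_density 0 \<sigma> (y i - f i y)) * ennreal (normal_density 0 \<sigma> e))"
    by (rule P.distributed_joint_indep'[OF _ _ distJ[folded N_def] noise_gauss deq])
       (auto simp: N_def intro: L.sigma_finite lborel.sigma_finite_measure_axioms)
  have tr: "distributed M K (\<lambda>\<omega>. Phi (restrict (X \<omega>) J, \<epsilon> s \<omega>))
      (\<lambda>x. (\<lambda>(y, e). ennreal (\<Prod>i\<in>J. normal_density 0 \<sigma> (y i - f i y)) * ennreal (normal_density 0 \<sigma> e)) (Psi x))"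
    by (rule distributed_transform[OF joint Phim Psim pres inv1 inv2])
  have repr: "Phi (restrict (X \<omega>) J, \<epsilon> s \<omega>) = restrict (X \<omega>) I" if "\<omega> \<in> space M" for \<omega>
  proof -
    have "f s (restrict (X \<omega>) J) = f s (X \<omega>)" using pas by (intro f_pa) auto
    then show ?thesis using anm[OF that, of s] IJ
      by (auto simp: Phi_def restrict_def fun_eq_iff)
  qed
  have dens: "(\<lambda>(y, e). ennreal (\<Prod>i\<in>J. normal_density 0 \<sigma> (y i - f i y)) * ennreal (normal_density 0 \<sigma> e)) (Psi x)
        = ennreal (\<Prod>i\<in>I. normal_density 0 \<sigma> (x i - f i x))" if "x \<in> space K" for x
  proof -
    have e1: "(\<Prod>i\<in>J. normal_density 0 \<sigma> (restrict x J i - f i (restrict x J)))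
            = (\<Prod>i\<in>J. normal_density 0 \<sigma> (x i - f i x))"
    proof (rule prod.cong)
      fix i assume i: "i \<in> J"
      have "f i (restrict x J) = f i x" using paJ[OF i] by (intro f_pa) auto
      then show "normal_density 0 \<sigma> (restrict x J i - f i (restrict x J)) = normal_density 0 \<sigma> (x i - f i x)"
        using i by simp
    qed simp
    have e2: "f s (restrict x J) = f s x" using pas by (intro f_pa) auto
    show ?thesis
      unfolding Psi_def using e1 e2 IJ sJ
      by (simp add: ennreal_mult[symmetric] prod_nonneg normal_density_nonneg mult.commute)
  qed
  have distI: "distributed M K (\<lambda>\<omega>. restrict (X \<omega>) I) (\<lambda>x. ennreal (\<Prod>i\<in>I. normal_density 0 \<sigma> (x i - f i x)))"
    by (rule distributed_cong'[OF tr repr dens])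
  define GI where "GI = (\<lambda>e. Phi (GJ (restrict e J), e s))"
  have GIm: "GI \<in> measurable (PiM I (\<lambda>_. borel)) K"
  proof -
    have r: "(\<lambda>e. GJ (restrict e J)) \<in> measurable (PiM I (\<lambda>_. borel)) N"
      unfolding N_def using measurable_comp[OF measurable_restrict_subset[of J I "\<lambda>_. borel"] GJm]
      by (auto simp: comp_def IJ)
    have c: "(\<lambda>e. e s) \<in> measurable (PiM I (\<lambda>_. borel)) (lborel::real measure)"
      using measurable_component_singleton[of s I "\<lambda>_. borel::real measure"] sI
      by (simp add: measurable_cong_sets[OF refl sets_lborel])
    have "(\<lambda>e. (GJ (restrict e J), e s)) \<in> measurable (PiM I (\<lambda>_. borel)) (N \<Otimes>\<^sub>M lborel)"
      using r c by (rule measurable_Pair)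
    then show ?thesis unfolding GI_def using Phim by (rule measurable_comp[unfolded comp_def])
  qed
  have GIr: "restrict (X \<omega>) I = GI (\<lambda>i\<in>I. \<epsilon> i \<omega>)" if "\<omega> \<in> space M" for \<omega>
  proof -
    have "restrict (\<lambda>i\<in>I. \<epsilon> i \<omega>) J = (\<lambda>i\<in>J. \<epsilon> i \<omega>)" using IJ by (auto simp: restrict_def fun_eq_iff)
    then show ?thesis using repr[OF that] GJr[OF that] sI by (simp add: GI_def)
  qed
  show ?case using GIm GIr distI unfolding K_def by blast
qed


lemma main:
  fixes p :: "('i \<Rightarrow> real) \<Rightarrow> real" and q :: "('i \<Rightarrow> real) \<Rightarrow> real" and l :: 'i
  assumes p_density: "distributed M (PiM UNIV (\<lambda>_. lborel)) X (\<lambda>x. ennreal (p x))"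
    and p_cont: "continuous_on UNIV p"
    and sink: "\<And>i. l \<notin> pa i"
    and q_density: "distributed M (PiM (UNIV - {l}) (\<lambda>_. lborel))
                      (\<lambda>\<omega>. restrict (X \<omega>) (UNIV - {l})) (\<lambda>y. ennreal (q y))"
    and q_cont: "continuous_on (PiE (UNIV - {l}) (\<lambda>_. UNIV)) q"
    and int_schur: "\<And>j k. j \<noteq> l \<Longrightarrow> k \<noteq> l \<Longrightarrow>
                      integrable M (\<lambda>\<omega>. schur (\<lambda>a b. negHessLog p a b (X \<omega>)) l j k)"
    and int_marg: "\<And>j k. j \<noteq> l \<Longrightarrow> k \<noteq> l \<Longrightarrow>
                      integrable M (\<lambda>\<omega>. negHessLog q j k (restrict (X \<omega>) (UNIV - {l})))"
  shows "\<forall>j k. j \<noteq> l \<longrightarrow> k \<noteq> l \<longrightarrow>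
           (\<integral>\<omega>. schur (\<lambda>a b. negHessLog p a b (X \<omega>)) l j k \<partial>M)
         = (\<integral>\<omega>. negHessLog q j k (restrict (X \<omega>) (UNIV - {l})) \<partial>M)"
proof (intro allI impI)
  fix j k :: 'i assume j: "j \<noteq> l" and k: "k \<noteq> l"
  interpret P: prob_space M by (rule M)
  define J where "J = UNIV - {l}"
  have jJ: "j \<in> J" and kJ: "k \<in> J" and lJ: "l \<notin> J" using j k by (auto simp: J_def)
  have UJ: "UNIV = insert l J" by (auto simp: J_def)
  define h where "h i a b x = (((if i = a then 1 else 0) - pd a (f i) x) * ((if i = b then 1 else 0) - pd b (f i) x)
             - (x i - f i x) * pd a (pd b (f i)) x) / \<sigma>\<^sup>2" for i a b x
  have fl: "offl l (f i)" for i
    unfolding offl_def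
  proof (intro allI impI)
    fix y y' :: "'i \<Rightarrow> real" assume a: "\<forall>i. i \<noteq> l \<longrightarrow> y i = y' i"
    show "f i y = f i y'"
    proof (rule f_pa)
      show "\<forall>j\<in>pa i. y j = y' j" using a sink[of i] by metis
    qed
  qed
  have Dcont: "continuous_on (PiE I (\<lambda>_. UNIV)) (\<lambda>x. \<Prod>i\<in>I. normal_density 0 \<sigma> (x i - f i x))" for I
    unfolding normal_density_def
    using sigma_pos
    by (intro continuous_intros continuous_on_subset[OF f_cont] continuous_on_subset[OF continuous_on_product_coordinates]) auto
  have Dpos: "(\<Prod>i\<in>I. normal_density 0 \<sigma> (x i - f i x)) > 0" for I x
    by (intro prod_pos) (simp add: normal_density_pos sigma_pos)
  have ae_real: "AE x in N. g1 x = g2 x"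
    if "AE x in N. ennreal (g1 x) = ennreal (g2 x)" "\<And>x. g2 x > 0" for N and g1 g2 :: "('i \<Rightarrow> real) \<Rightarrow> real"
    using that(1)
  proof (rule eventually_mono)
    fix x assume e: "ennreal (g1 x) = ennreal (g2 x)"
    have g2: "g2 x > 0" by (rule that(2))
    show "g1 x = g2 x"
    proof (cases "g1 x \<ge> 0")
      case True then show ?thesis using e g2 by simp
    next
      case False then have "ennreal (g1 x) = 0" by (simp add: ennreal_eq_0_iff)
      then show ?thesis using e g2 by (simp add: ennreal_eq_0_iff)
    qed
  qed
  have pU: "p x = (\<Prod>i\<in>UNIV. normal_density 0 \<sigma> (x i - f i x))" for x
  proof -
    have c: "distributed M (PiM UNIV (\<lambda>_. lborel)) (\<lambda>\<omega>. restrict (X \<omega>) UNIV)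
            (\<lambda>x. ennreal (\<Prod>i\<in>UNIV. normal_density 0 \<sigma> (x i - f i x)))"
      using claim[of UNIV] by blast
    have d1: "distributed M (PiM UNIV (\<lambda>_. lborel)) X
            (\<lambda>x. ennreal (\<Prod>i\<in>UNIV. normal_density 0 \<sigma> (x i - f i x)))"
      by (rule distributed_cong'[OF c]) (auto simp: restrict_def)
    have ae: "AE x in PiM UNIV (\<lambda>_. lborel). p x = (\<Prod>i\<in>UNIV. normal_density 0 \<sigma> (x i - f i x))"
      by (rule ae_real[OF P.distributed_unique[OF p_density d1] Dpos])
    have c1: "continuous_on (PiE UNIV (\<lambda>_. UNIV)) p" by (rule continuous_on_subset[OF p_cont]) simp
    show ?thesis by (rule cont_ae_eq[OF c1 Dcont ae]) simp
  qed
  have qJ: "q z = (\<Prod>i\<in>J. normal_density 0 \<sigma> (z i - f i z))" if z: "z \<in> PiE J (\<lambda>_. UNIV)" for z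
  proof -
    have paJ: "pa i \<subseteq> J" if "i \<in> J" for i using sink by (auto simp: J_def)
    have c: "distributed M (PiM J (\<lambda>_. lborel)) (\<lambda>\<omega>. restrict (X \<omega>) J)
            (\<lambda>x. ennreal (\<Prod>i\<in>J. normal_density 0 \<sigma> (x i - f i x)))"
      using claim[of J] paJ by blast
    have "AE x in PiM J (\<lambda>_. lborel). q x = (\<Prod>i\<in>J. normal_density 0 \<sigma> (x i - f i x))"
      by (rule ae_real[OF P.distributed_unique[OF q_density[folded J_def] c] Dpos])
    then show ?thesis
      by (rule cont_ae_eq[OF q_cont[folded J_def] Dcont _ z])
  qed
  have Hp: "negHessLog p a b x = (\<Sum>i\<in>UNIV. h i a b x)" for a b x
    unfolding h_def sum_divide_distrib[symmetric] by (rule hess_formula[OF f_C2 sigma_pos]) (auto simp: pU)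
  have HqX: "negHessLog q j k (restrict x J) = (\<Sum>i\<in>J. h i j k x)" for x
  proof -
    have "negHessLog q j k (restrict x J) = (\<Sum>i\<in>J. h i j k (restrict x J))"
      unfolding h_def sum_divide_distrib[symmetric] by (rule hess_formula[OF f_C2 sigma_pos qJ jJ kJ]) auto
    also have "\<dots> = (\<Sum>i\<in>J. h i j k x)"
    proof (rule sum.cong[OF refl])
      fix i assume i: "i \<in> J"
      have o1: "offl l (pd j (f i))" "offl l (pd k (f i))" "offl l (pd j (pd k (f i)))"
        using fl by (auto intro!: offl_pd)
      show "h i j k (restrict x J) = h i j k x"
        unfolding h_def J_def using i
        by (simp add: offl_restrict[OF fl] offl_restrict[OF o1(1)] offl_restrict[OF o1(2)]
            offl_restrict[OF o1(3)] J_def)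
    qed
    finally show ?thesis .
  qed
  have pdl0: "pd a (pd l (f i)) x = 0" for a i x
  proof -
    have "pd l (f i) = (\<lambda>_. 0)" by (rule ext) (rule offl_pd_l[OF fl])
    then show ?thesis by (simp add: pd_def DERIV_imp_deriv[OF DERIV_const])
  qed
  have hal: "h i a l x = (if i = l then ((if l = a then 1 else 0) - pd a (f l) x) / \<sigma>\<^sup>2 else 0)" for i a x
    unfolding h_def using offl_pd_l[OF fl] pdl0 by auto
  have hlb: "h i l b x = (if i = l then ((if l = b then 1 else 0) - pd b (f l) x) / \<sigma>\<^sup>2 else 0)" for i b x
  proof -
    have "pd l (pd b (f i)) x = 0" using offl_pd_l[OF offl_pd[OF fl]] by blast
    then show ?thesis unfolding h_def using offl_pd_l[OF fl] by auto
  qed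
  have Hll: "negHessLog p l l x = 1 / \<sigma>\<^sup>2" for x
    unfolding Hp hal using offl_pd_l[OF fl] by simp
  have Hjl: "negHessLog p j l x = - pd j (f l) x / \<sigma>\<^sup>2" for x
    unfolding Hp hal using j by simp
  have Hlk: "negHessLog p l k x = - pd k (f l) x / \<sigma>\<^sup>2" for x
    unfolding Hp hlb using k by simp
  have schur_eq: "schur (\<lambda>a b. negHessLog p a b x) l j k
      = negHessLog q j k (restrict x J) - (x l - f l x) * pd j (pd k (f l)) x / \<sigma>\<^sup>2" for x
  proof -
    have "negHessLog p j k x = h l j k x + (\<Sum>i\<in>J. h i j k x)"
      unfolding Hp UJ using lJ by simp
    then show ?thesis
      unfolding schur_def HqX Hll Hjl Hlk h_def using j k sigma_pos
      by (simp add: field_simps)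
  qed
  define G where "G = pd j (pd k (f l))"
  have Gofl: "offl l G" unfolding G_def using fl by (auto intro!: offl_pd)
  have Gm: "G \<in> borel_measurable (PiM J (\<lambda>_. lborel))"
  proof (rule meas_local)
    show "continuous_on UNIV G" using f_C2[of l] by (simp add: C2_def G_def)
    show "G x = G y" if "\<forall>i\<in>J. x i = y i" for x y
      using Gofl that unfolding offl_def J_def by auto
  qed simp
  define W where "W \<omega> = \<epsilon> l \<omega> * G (restrict (X \<omega>) J) / \<sigma>\<^sup>2" for \<omega>
  have schur_W: "schur (\<lambda>a b. negHessLog p a b (X \<omega>)) l j k
      = negHessLog q j k (restrict (X \<omega>) J) - W \<omega>" if "\<omega> \<in> space M" for \<omega>
    unfolding schur_eq W_def using anm[OF that, of l] offl_restrict[OF Gofl, of "X \<omega>"]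
    by (simp add: G_def J_def)
  have W0: "(\<integral>\<omega>. W \<omega> \<partial>M) = 0"
  proof -
    have paJ: "pa i \<subseteq> J" if "i \<in> J" for i using sink by (auto simp: J_def)
    obtain GJ where GJm: "GJ \<in> measurable (PiM J (\<lambda>_. borel)) (PiM J (\<lambda>_. lborel))"
      and GJr: "\<And>\<omega>. \<omega>\<in>space M \<Longrightarrow> restrict (X \<omega>) J = GJ (\<lambda>i\<in>J. \<epsilon> i \<omega>)"
      using claim[of J] paJ by blast
    define N where "N = PiM J (\<lambda>_. lborel :: real measure)"
    have ind0: "P.indep_var (PiM J (\<lambda>_. borel)) (\<lambda>\<omega>. restrict (\<lambda>i. \<epsilon> i \<omega>) J)
                          (PiM {l} (\<lambda>_. borel)) (\<lambda>\<omega>. restrict (\<lambda>i. \<epsilon> i \<omega>) {l})"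
      by (rule P.indep_var_restrict[OF noise_indep]) (use lJ in auto)
    have ind1: "P.indep_var N (GJ \<circ> (\<lambda>\<omega>. restrict (\<lambda>i. \<epsilon> i \<omega>) J))
                          (PiM {l} (\<lambda>_. borel)) ((\<lambda>z. z) \<circ> (\<lambda>\<omega>. restrict (\<lambda>i. \<epsilon> i \<omega>) {l}))"
      unfolding N_def by (rule P.indep_var_compose[OF ind0 GJm measurable_ident_sets[OF refl]])
    have cs: "(\<lambda>z. c * z l) \<in> measurable (PiM {l} (\<lambda>_. borel)) (lborel :: real measure)" for c :: real
    proof -
      have "(\<lambda>z. z l) \<in> measurable (PiM {l} (\<lambda>_. borel)) (borel :: real measure)"
        by (rule measurable_component_singleton) simp
      then have "(\<lambda>z. c * z l) \<in> measurable (PiM {l} (\<lambda>_. borel)) (borel :: real measure)"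
        by (rule borel_measurable_times[OF borel_measurable_const])
      then show ?thesis by (simp add: measurable_cong_sets[OF refl sets_lborel])
    qed
    have deq: "distr M (N \<Otimes>\<^sub>M lborel) (\<lambda>\<omega>. (restrict (X \<omega>) J, c * \<epsilon> l \<omega>))
             = distr M N (\<lambda>\<omega>. restrict (X \<omega>) J) \<Otimes>\<^sub>M distr M lborel (\<lambda>\<omega>. c * \<epsilon> l \<omega>)" for c :: real
    proof -
      have d0: "distr M N (GJ \<circ> (\<lambda>\<omega>. restrict (\<lambda>i. \<epsilon> i \<omega>) J)) \<Otimes>\<^sub>M distr M lborel (\<lambda>\<omega>. (\<lambda>z. c * z l) (((\<lambda>z. z) \<circ> (\<lambda>\<omega>. restrict (\<lambda>i. \<epsilon> i \<omega>) {l})) \<omega>))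
         = distr M (N \<Otimes>\<^sub>M lborel) (\<lambda>\<omega>. ((GJ \<circ> (\<lambda>\<omega>. restrict (\<lambda>i. \<epsilon> i \<omega>) J)) \<omega>, (\<lambda>z. c * z l) (((\<lambda>z. z) \<circ> (\<lambda>\<omega>. restrict (\<lambda>i. \<epsilon> i \<omega>) {l})) \<omega>)))"
        by (rule indep_distr_pair_map[OF M ind1 cs])
      have "distr M N (GJ \<circ> (\<lambda>\<omega>. restrict (\<lambda>i. \<epsilon> i \<omega>) J)) = distr M N (\<lambda>\<omega>. restrict (X \<omega>) J)"
        by (rule distr_cong) (auto simp: GJr)
      moreover have "distr M lborel (\<lambda>\<omega>. (\<lambda>z. c * z l) (((\<lambda>z. z) \<circ> (\<lambda>\<omega>. restrict (\<lambda>i. \<epsilon> i \<omega>) {l})) \<omega>)) = distr M lborel (\<lambda>\<omega>. c * \<epsilon> l \<omega>)"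
        by (rule distr_cong) auto
      moreover have "distr M (N \<Otimes>\<^sub>M lborel) (\<lambda>\<omega>. ((GJ \<circ> (\<lambda>\<omega>. restrict (\<lambda>i. \<epsilon> i \<omega>) J)) \<omega>, (\<lambda>z. c * z l) (((\<lambda>z. z) \<circ> (\<lambda>\<omega>. restrict (\<lambda>i. \<epsilon> i \<omega>) {l})) \<omega>)))
         = distr M (N \<Otimes>\<^sub>M lborel) (\<lambda>\<omega>. (restrict (X \<omega>) J, c * \<epsilon> l \<omega>))"
        by (rule distr_cong) (auto simp: GJr)
      ultimately show ?thesis using d0 by simp
    qed
    have neg: "distr M lborel (\<lambda>\<omega>. (-1) * \<epsilon> l \<omega>) = distr M lborel (\<lambda>\<omega>. 1 * \<epsilon> l \<omega>)"
    proof -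
      have "distributed M lborel (\<lambda>x. 0 + (-1) * \<epsilon> l x) (normal_density (0 + (-1) * 0) (\<bar>-1\<bar> * \<sigma>))"
        by (rule P.normal_density_affine[OF noise_gauss sigma_pos]) simp
      then have a: "distr M lborel (\<lambda>\<omega>. (-1) * \<epsilon> l \<omega>) = density lborel (normal_density 0 \<sigma>)"
        by (simp add: distributed_def)
      have b: "distr M lborel (\<lambda>\<omega>. 1 * \<epsilon> l \<omega>) = density lborel (normal_density 0 \<sigma>)"
        using noise_gauss[of l] by (simp add: distributed_def)
      show ?thesis using a b by simp
    qed
    have Xm: "(\<lambda>\<omega>. restrict (X \<omega>) J) \<in> measurable M N"
      using claim[of J] paJ unfolding N_def distributed_def by blast
    have em: "\<epsilon> l \<in> borel_measurable M"
      using noise_gauss[of l] by (simp add: distributed_def measurable_cong_sets[OF refl sets_lborel])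
    define F where "F = (\<lambda>(y, e). e * G y / \<sigma>\<^sup>2 :: real)"
    have Fm: "F \<in> borel_measurable (N \<Otimes>\<^sub>M lborel)"
      unfolding F_def N_def using Gm by measurable
    have I: "(\<integral>\<omega>. F (restrict (X \<omega>) J, c * \<epsilon> l \<omega>) \<partial>M)
        = integral\<^sup>L (distr M N (\<lambda>\<omega>. restrict (X \<omega>) J) \<Otimes>\<^sub>M distr M lborel (\<lambda>\<omega>. c * \<epsilon> l \<omega>)) F" for c :: real
    proof -
      have m: "(\<lambda>\<omega>. (restrict (X \<omega>) J, c * \<epsilon> l \<omega>)) \<in> measurable M (N \<Otimes>\<^sub>M lborel)"
        using Xm em by (auto intro!: measurable_Pair simp: measurable_cong_sets[OF refl sets_lborel])
      show ?thesis unfolding deq[symmetric] by (rule integral_distr[OF m Fm, symmetric])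
    qed
    have "(\<integral>\<omega>. W \<omega> \<partial>M) = (\<integral>\<omega>. F (restrict (X \<omega>) J, 1 * \<epsilon> l \<omega>) \<partial>M)"
      by (simp add: W_def F_def)
    also have "\<dots> = (\<integral>\<omega>. F (restrict (X \<omega>) J, (-1) * \<epsilon> l \<omega>) \<partial>M)"
      unfolding I neg ..
    also have "\<dots> = - (\<integral>\<omega>. W \<omega> \<partial>M)"
      by (simp add: W_def F_def)
    finally show ?thesis by simp
  qed
  have Wint: "integrable M W"
  proof -
    have "integrable M (\<lambda>\<omega>. negHessLog q j k (restrict (X \<omega>) J) - schur (\<lambda>a b. negHessLog p a b (X \<omega>)) l j k)"
      using int_marg[OF j k] int_schur[OF j k] unfolding J_def by (rule Bochner_Integration.integrable_diff)
    moreover have "integrable M W \<longleftrightarrow> integrable M (\<lambda>\<omega>. negHessLog q j k (restrict (X \<omega>) J) - schur (\<lambda>a b. negHessLog p a b (X \<omega>)) l j k)"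
      by (rule Bochner_Integration.integrable_cong[OF refl]) (simp add: schur_W)
    ultimately show ?thesis by simp
  qed
  have "(\<integral>\<omega>. schur (\<lambda>a b. negHessLog p a b (X \<omega>)) l j k \<partial>M)
      = (\<integral>\<omega>. negHessLog q j k (restrict (X \<omega>) J) - W \<omega> \<partial>M)"
    by (rule Bochner_Integration.integral_cong[OF refl]) (simp add: schur_W)
  also have "\<dots> = (\<integral>\<omega>. negHessLog q j k (restrict (X \<omega>) J) \<partial>M) - (\<integral>\<omega>. W \<omega> \<partial>M)"
    using int_marg[OF j k] Wint unfolding J_def by (rule Bochner_Integration.integral_diff)
  finally show "(\<integral>\<omega>. schur (\<lambda>a b. negHessLog p a b (X \<omega>)) l j k \<partial>M)
         = (\<integral>\<omega>. negHessLog q j k (restrict (X \<omega>) (UNIV - {l})) \<partial>M)"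
    using W0 by (simp add: J_def)
qed


end

theorem lemma3p3:
  fixes M :: "'a measure"
    and pa :: "'i::finite \<Rightarrow> 'i set"
    and f :: "'i \<Rightarrow> ('i \<Rightarrow> real) \<Rightarrow> real"
    and \<epsilon> :: "'i \<Rightarrow> 'a \<Rightarrow> real"
    and X :: "'a \<Rightarrow> ('i \<Rightarrow> real)"
    and \<sigma> :: real
    and p :: "('i \<Rightarrow> real) \<Rightarrow> real"
    and q :: "('i \<Rightarrow> real) \<Rightarrow> real"
    and l :: 'i
  assumes M: "prob_space M"
    and dag: "acyclic {(j, i). j \<in> pa i}"
    and f_pa: "\<And>i x y. (\<forall>j\<in>pa i. x j = y j) \<Longrightarrow> f i x = f i y"
    and f_C2: "\<And>i. C2 (f i)"
    and sigma_pos: "\<sigma> > 0"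
    and noise_indep: "prob_space.indep_vars M (\<lambda>_. borel) \<epsilon> UNIV"
    and noise_gauss: "\<And>i. distributed M lborel (\<epsilon> i) (\<lambda>t. ennreal (normal_density 0 \<sigma> t))"
    and anm: "\<And>\<omega> i. \<omega> \<in> space M \<Longrightarrow> X \<omega> i = f i (X \<omega>) + \<epsilon> i \<omega>"
    and p_density: "distributed M (PiM UNIV (\<lambda>_. lborel)) X (\<lambda>x. ennreal (p x))"
    and p_cont: "continuous_on UNIV p"
    and sink: "\<And>i. l \<notin> pa i"
    and q_density: "distributed M (PiM (UNIV - {l}) (\<lambda>_. lborel))
                      (\<lambda>\<omega>. restrict (X \<omega>) (UNIV - {l})) (\<lambda>y. ennreal (q y))"
    and q_cont: "continuous_on (PiE (UNIV - {l}) (\<lambda>_. UNIV)) q"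
    and int_schur: "\<And>j k. j \<noteq> l \<Longrightarrow> k \<noteq> l \<Longrightarrow>
                      integrable M (\<lambda>\<omega>. schur (\<lambda>a b. negHessLog p a b (X \<omega>)) l j k)"
    and int_marg: "\<And>j k. j \<noteq> l \<Longrightarrow> k \<noteq> l \<Longrightarrow>
                      integrable M (\<lambda>\<omega>. negHessLog q j k (restrict (X \<omega>) (UNIV - {l})))"
  shows "\<forall>j k. j \<noteq> l \<longrightarrow> k \<noteq> l \<longrightarrow>
           (\<integral>\<omega>. schur (\<lambda>a b. negHessLog p a b (X \<omega>)) l j k \<partial>M)
         = (\<integral>\<omega>. negHessLog q j k (restrict (X \<omega>) (UNIV - {l})) \<partial>M)"
    by (rule main[OF M dag f_pa f_C2 sigma_pos noise_indep noise_gauss anm p_density p_cont sink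
      q_density q_cont int_schur int_marg])

end
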